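(* For every finite abelian $p$-group $H$, $N_{\mathrm{typical}}(H,\mathbb{F}_p)=0$, where $\mathbb{F}_p$ carries the trivial action.
   Context: For a finite abelian group $D$, subgroup $I$ with $D/I$ cyclic and finite $D$-module $M$: $\widehat D:=\hat{\mathbb{Z}}\times_{D/I}D$, $R(D,I,M):=\ker(H^2(D,M)\xrightarrow{\inf}H^2(\widehat D,M))$. $\mathcal{C}$ is the set of pairs $(D,I)$ with $D\le H$ generated by at most two elements, $I\le D$ cyclic with $D/I$ cyclic. $N_{\mathrm{typical}}(H,M):=\ker\bigl(H^2(H,M)\to\bigoplus_{(D,I)\in\mathcal{C}}H^2(D,M)/R(D,I,M)\bigr)$ (restriction maps). *)

theory Defs
  imports "HOL-Algebra.Algebra" "HOL-Computational_Algebra.Primes"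
begin

text \<open>Profinite integers: compatible systems of residues, a n in [0,n), a 0 = 0.\<close>
definition Zhat :: "(nat \<Rightarrow> int) set" where
  "Zhat = {a. a 0 = 0 \<and> (\<forall>n>0. 0 \<le> a n \<and> a n < int n)
             \<and> (\<forall>n>0. \<forall>k>0. k dvd n \<longrightarrow> a n mod int k = a k)}"

definition zhat_add :: "(nat \<Rightarrow> int) \<Rightarrow> (nat \<Rightarrow> int) \<Rightarrow> nat \<Rightarrow> int" where
  "zhat_add a b = (\<lambda>n. (a n + b n) mod int n)"

definition quot_generator :: "('g,'b) monoid_scheme \<Rightarrow> 'g set \<Rightarrow> 'g set \<Rightarrow> 'g \<Rightarrow> bool" where
  "quot_generator G D I t \<longleftrightarrow> t \<in> D \<and>
     (\<forall>d\<in>D. \<exists>k::nat. d \<otimes>\<^bsub>G\<^esub> inv\<^bsub>G\<^esub> (t [^]\<^bsub>G\<^esub> k) \<in> I)"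

text \<open>Fibre product hatD = Zhat x_{D/I} D, where Zhat -> D/I sends 1 to the coset t I.\<close>
definition hatD :: "('g,'b) monoid_scheme \<Rightarrow> 'g set \<Rightarrow> 'g set \<Rightarrow> 'g \<Rightarrow> ((nat \<Rightarrow> int) * 'g) set" where
  "hatD G D I t = {(a, d). a \<in> Zhat \<and> d \<in> D \<and>
     d \<otimes>\<^bsub>G\<^esub> inv\<^bsub>G\<^esub> (t [^]\<^bsub>G\<^esub> nat (a (card D div card I))) \<in> I}"

definition hatD_mult :: "('g,'b) monoid_scheme \<Rightarrow> ((nat \<Rightarrow> int) * 'g) \<Rightarrow> ((nat \<Rightarrow> int) * 'g) \<Rightarrow> ((nat \<Rightarrow> int) * 'g)" where
  "hatD_mult G x y = (zhat_add (fst x) (fst y), snd x \<otimes>\<^bsub>G\<^esub> snd y)"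

text \<open>Inhomogeneous 2-cocycles / 2-coboundaries with values in F_p (trivial action),
  F_p represented by int modulo p.\<close>
definition cocycle2 :: "nat \<Rightarrow> 'x set \<Rightarrow> ('x \<Rightarrow> 'x \<Rightarrow> 'x) \<Rightarrow> ('x \<Rightarrow> 'x \<Rightarrow> int) \<Rightarrow> bool" where
  "cocycle2 p S m f \<longleftrightarrow> (\<forall>g\<in>S. \<forall>h\<in>S. \<forall>k\<in>S.
      (f h k - f (m g h) k + f g (m h k) - f g h) mod int p = 0)"

definition coboundary2 :: "nat \<Rightarrow> 'x set \<Rightarrow> ('x \<Rightarrow> 'x \<Rightarrow> 'x) \<Rightarrow> ('x \<Rightarrow> 'x \<Rightarrow> int) \<Rightarrow> bool" where
  "coboundary2 p S m f \<longleftrightarrow> (\<exists>c. \<forall>g\<in>S. \<forall>h\<in>S.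
      (f g h - (c h - c (m g h) + c g)) mod int p = 0)"

text \<open>Continuous (= locally constant) F_p-valued 1-cochain on hatD.\<close>
definition hatD_continuous :: "nat \<Rightarrow> ((nat \<Rightarrow> int) * 'g) set \<Rightarrow> ((nat \<Rightarrow> int) * 'g \<Rightarrow> int) \<Rightarrow> bool" where
  "hatD_continuous p S c \<longleftrightarrow> (\<forall>x\<in>S. \<exists>N>0. \<forall>y\<in>S.
      fst y N = fst x N \<and> snd y = snd x \<longrightarrow> c y mod int p = c x mod int p)"

text \<open>The class of f restricted to D lies in R(D,I,F_p): its inflation to hatD is a
  continuous coboundary.\<close>
definition in_R :: "('g,'b) monoid_scheme \<Rightarrow> nat \<Rightarrow> 'g set \<Rightarrow> 'g set \<Rightarrow> ('g \<Rightarrow> 'g \<Rightarrow> int) \<Rightarrow> bool" where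
  "in_R G p D I f \<longleftrightarrow> (\<exists>t. quot_generator G D I t \<and>
     (\<exists>c. hatD_continuous p (hatD G D I t) c \<and>
        (\<forall>x\<in>hatD G D I t. \<forall>y\<in>hatD G D I t.
           (f (snd x) (snd y) - (c y - c (hatD_mult G x y) + c x)) mod int p = 0)))"

definition typical_pairs :: "('g,'b) monoid_scheme \<Rightarrow> ('g set * 'g set) set" where
  "typical_pairs G = {(D, I).
     (\<exists>a\<in>carrier G. \<exists>b\<in>carrier G. D = generate G {a, b}) \<and>
     (\<exists>c\<in>D. I = generate G {c}) \<and>
     (\<exists>t. quot_generator G D I t)}"

end

theory Submission
  imports Defs
begin


context comm_group begin

lemma pow_int_mod_p:
  assumes "a \<in> carrier G" "a [^] (p::nat) = \<one>" "p > 0"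
  shows "a [^] (j::int) = a [^] (nat (j mod int p))"
proof -
  have "j = int p * (j div int p) + j mod int p" by simp
  then have "a [^] j = (a [^] int p) [^] (j div int p) \<otimes> a [^] (j mod int p)"
    by (metis assms(1) int_pow_mult int_pow_pow)
  also have "\<dots> = a [^] (j mod int p)" using assms by (simp add: int_pow_int)
  also have "\<dots> = a [^] (nat (j mod int p))" using assms(3) by (simp add: pow_nat)
  finally show ?thesis .
qed

lemma comm4:
  assumes "a \<in> carrier G" "b \<in> carrier G" "c \<in> carrier G" "d \<in> carrier G"
  shows "(a \<otimes> b) \<otimes> (c \<otimes> d) = (a \<otimes> c) \<otimes> (b \<otimes> d)"
  using assms by (simp add: m_assoc m_lcomm)

lemma comm3:
  assumes "a \<in> carrier G" "b \<in> carrier G" "c \<in> carrier G"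
  shows "(a \<otimes> b) \<otimes> c = (a \<otimes> c) \<otimes> b"
proof -
  have "(a \<otimes> b) \<otimes> c = a \<otimes> (b \<otimes> c)" using assms by (simp add: m_assoc)
  also have "b \<otimes> c = c \<otimes> b" using assms by (simp add: m_comm)
  finally show ?thesis using assms by (simp add: m_assoc)
qed

lemma split_lemma:
  assumes fin: "finite (carrier G)" and pr: "Factorial_Ring.prime (p::nat)"
    and a: "a \<in> carrier G" "a [^] p = \<one>"
    and notp: "\<And>y. y \<in> carrier G \<Longrightarrow> y [^] p \<noteq> a"
  shows "\<exists>M. subgroup M G \<and> a \<notin> M \<and> (\<forall>x\<in>carrier G. \<exists>m\<in>M. \<exists>j::nat. x = m \<otimes> a [^] j)"
proof -
  have p0: "p > 0" using pr prime_gt_0_nat by blast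
  define F where "F = {M. subgroup M G \<and> (\<forall>y\<in>carrier G. y [^] p \<in> M) \<and> a \<notin> M}"
  define P0 where "P0 = (\<lambda>y. y [^] p) ` carrier G"
  have "subgroup P0 G"
  proof (rule subgroupI)
    show "P0 \<subseteq> carrier G" unfolding P0_def by auto
    show "P0 \<noteq> {}" unfolding P0_def by auto
    fix u v assume "u \<in> P0" "v \<in> P0"
    then obtain y z where yz: "y \<in> carrier G" "z \<in> carrier G" "u = y [^] p" "v = z [^] p"
      unfolding P0_def by auto
    show "inv u \<in> P0" unfolding P0_def using yz
      by (metis image_eqI inv_closed nat_pow_inv)
    show "u \<otimes> v \<in> P0" unfolding P0_def using yz
      by (metis image_eqI m_closed nat_pow_distrib)
  qed
  moreover have "a \<notin> P0" using notp unfolding P0_def by auto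
  ultimately have P0F: "P0 \<in> F" unfolding F_def P0_def by auto
  have finF: "finite F" 
    by (rule finite_subset[of _ "Pow (carrier G)"]) (auto simp: F_def fin dest: subgroup.subset)
  define k where "k = Max (card ` F)"
  have "k \<in> card ` F" unfolding k_def using finF P0F by (intro Max_in) auto
  then obtain M where MF: "M \<in> F" and Mk: "card M = k" by auto
  have Mmax: "card M' \<le> card M" if "M' \<in> F" for M'
    unfolding Mk k_def using finF that by (intro Max_ge) auto
  have sM: "subgroup M G" and pM: "\<And>y. y \<in> carrier G \<Longrightarrow> y [^] p \<in> M" and aM: "a \<notin> M"
    using MF unfolding F_def by auto
  have MG: "M \<subseteq> carrier G" using sM subgroup.subset by blast
  have "\<forall>x\<in>carrier G. \<exists>m\<in>M. \<exists>j::int. x = m \<otimes> a [^] j"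
  proof (rule ccontr)
    assume "\<not> ?thesis"
    then obtain x where x: "x \<in> carrier G" and xN: "\<And>m j. m \<in> M \<Longrightarrow> x \<noteq> m \<otimes> a [^] (j::int)" by auto
    define M' where "M' = {m \<otimes> x [^] (j::int) | m j. m \<in> M}"
    have sM': "subgroup M' G"
    proof (rule subgroupI)
      show "M' \<subseteq> carrier G" unfolding M'_def using MG x by auto
      show "M' \<noteq> {}" unfolding M'_def using subgroup.one_closed[OF sM] by auto
      fix u v assume "u \<in> M'" "v \<in> M'"
      then obtain m1 j1 m2 j2 where u: "m1 \<in> M" "u = m1 \<otimes> x [^] (j1::int)"
        and v: "m2 \<in> M" "v = m2 \<otimes> x [^] (j2::int)" unfolding M'_def by auto
      have "inv u = inv m1 \<otimes> x [^] (- j1)" using u MG x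
        by (simp add: inv_mult int_pow_neg subsetD)
      then show "inv u \<in> M'" unfolding M'_def using subgroup.m_inv_closed[OF sM u(1)] by blast
      have m12: "m1 \<in> carrier G" "m2 \<in> carrier G" using u v MG by auto
      have "u \<otimes> v = (m1 \<otimes> m2) \<otimes> (x [^] j1 \<otimes> x [^] j2)"
        unfolding u(2) v(2) by (rule comm4) (use m12 x in auto)
      also have "\<dots> = (m1 \<otimes> m2) \<otimes> x [^] (j1 + j2)" using x by (simp add: int_pow_mult)
      finally have "u \<otimes> v = (m1 \<otimes> m2) \<otimes> x [^] (j1 + j2)" .
      then show "u \<otimes> v \<in> M'" unfolding M'_def using subgroup.m_closed[OF sM u(1) v(1)] by blast
    qed
    have MM': "M \<subseteq> M'" unfolding M'_def
    proof
      fix m assume "m \<in> M" then show "m \<in> {m \<otimes> x [^] (j::int) | m j. m \<in> M}"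
        using MG by (intro CollectI exI[of _ m] exI[of _ "0::int"]) (auto simp: subsetD)
    qed
    have xM': "x \<in> M'" unfolding M'_def
      using subgroup.one_closed[OF sM] x by (intro CollectI exI[of _ \<one>] exI[of _ "1::int"]) auto
    have xM: "x \<notin> M" using xN[of x 0] x by auto
    have finM': "finite M'" using fin sM' by (meson finite_subset subgroup.subset)
    have "M \<subset> M'" using MM' xM' xM by blast
    then have "card M < card M'" using psubset_card_mono[OF finM'] by blast
    moreover have "a \<notin> M'"
    proof
      assume "a \<in> M'"
      then obtain m j where mj: "m \<in> M" "a = m \<otimes> x [^] (j::int)" unfolding M'_def by auto
      define q r where "q = j div int p" and "r = j mod int p"
      have jqr: "j = int p * q + r" unfolding q_def r_def by simp
      have xp: "x [^] p \<in> M" using pM x by auto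
      have xpq: "(x [^] p) [^] q \<in> M" by (rule subgroup_int_pow_closed[OF sM xp])
      define m' where "m' = m \<otimes> (x [^] p) [^] q"
      have m'M: "m' \<in> M" unfolding m'_def by (rule subgroup.m_closed[OF sM mj(1) xpq])
      have "x [^] j = x [^] (int p * q) \<otimes> x [^] r" unfolding jqr by (rule int_pow_mult[OF x])
      also have "x [^] (int p * q) = (x [^] int p) [^] q" by (rule int_pow_pow[OF x, symmetric])
      finally have "x [^] j = (x [^] p) [^] q \<otimes> x [^] r" by (simp add: int_pow_int)
      then have am': "a = m' \<otimes> x [^] r" unfolding m'_def using mj MG x
        by (simp add: m_assoc subsetD)
      show False
      proof (cases "r = 0")
        case True
        then show False using am' m'M MG aM by (simp add: subsetD)
      next
        case False
        have r: "0 \<le> r" "r < int p" unfolding r_def using p0 by auto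
        have "\<not> int p dvd r" using r False zdvd_not_zless by fastforce
        moreover have "Factorial_Ring.prime (int p)" using pr by simp
        ultimately have "coprime (int p) r" by (intro prime_imp_coprime)
        then have "coprime r (int p)" by (simp add: coprime_commute)
        then have "gcd r (int p) = 1" by simp
        then obtain u v where uv: "u * r + v * int p = 1" by (metis bezout_int)
        have xr: "x [^] r = inv m' \<otimes> a" using am' m'M MG x a
          by (simp add: subsetD m_assoc[symmetric])
        have "r * u + int p * v = 1" using uv by (simp add: algebra_simps)
        then have "x = x [^] (r * u + int p * v)" using x by simp
        also have "\<dots> = x [^] (r * u) \<otimes> x [^] (int p * v)" by (rule int_pow_mult[OF x])
        also have "\<dots> = (x [^] r) [^] u \<otimes> (x [^] int p) [^] v" by (simp add: int_pow_pow x)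
        also have "\<dots> = (x [^] r) [^] u \<otimes> (x [^] p) [^] v" by (simp add: int_pow_int)
        also have "\<dots> = ((inv m') [^] u \<otimes> a [^] u) \<otimes> (x [^] p) [^] v"
          using xr m'M MG x a by (simp add: int_pow_distrib subsetD)
        also have "\<dots> = ((inv m') [^] u \<otimes> (x [^] p) [^] v) \<otimes> a [^] u"
          using m'M MG x a by (intro comm3) (auto simp: subsetD)
        also have "\<dots> = ((inv m') [^] u \<otimes> (x [^] p) [^] v) \<otimes> a [^] (u mod int p)"
        proof -
          have "a [^] u = a [^] (nat (u mod int p))" by (rule pow_int_mod_p[OF a p0])
          also have "\<dots> = a [^] (u mod int p)" by (rule pow_nat) (use p0 in simp)
          finally show ?thesis by simp
        qed
        finally show False using xN[of "(inv m') [^] u \<otimes> (x [^] p) [^] v" "u mod int p"]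
          using m'M xp sM by (meson subgroup.m_closed subgroup.m_inv_closed subgroup_int_pow_closed)
      qed
    qed
    then have "M' \<in> F" unfolding F_def using sM' MM' pM by auto
    then have "card M' \<le> card M" by (rule Mmax)
    ultimately show False by simp
  qed
  then have "\<forall>x\<in>carrier G. \<exists>m\<in>M. \<exists>j::nat. x = m \<otimes> a [^] j"
  proof (intro ballI)
    fix x assume "x \<in> carrier G"
    then obtain m j where "m \<in> M" "x = m \<otimes> a [^] (j::int)" using \<open>\<forall>x\<in>carrier G. _\<close> by blast
    moreover have "a [^] j = a [^] (nat (j mod int p))" by (rule pow_int_mod_p[OF a p0])
    ultimately show "\<exists>m\<in>M. \<exists>j::nat. x = m \<otimes> a [^] j" by metis
  qed
  then show ?thesis using sM aM by blast
qed

end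



definition extgrp :: "('g,'b) monoid_scheme \<Rightarrow> nat \<Rightarrow> ('g \<Rightarrow> 'g \<Rightarrow> int) \<Rightarrow> (int \<times> 'g) monoid" where
  "extgrp G p f = \<lparr>carrier = {0..<int p} \<times> carrier G,
     monoid.mult = (\<lambda>x y. ((fst x + fst y + f (snd x) (snd y)) mod int p, snd x \<otimes>\<^bsub>G\<^esub> snd y)),
     one = (0, \<one>\<^bsub>G\<^esub>)\<rparr>"

lemma extgrp_simps:
  "carrier (extgrp G p f) = {0..<int p} \<times> carrier G"
  "x \<otimes>\<^bsub>extgrp G p f\<^esub> y = ((fst x + fst y + f (snd x) (snd y)) mod int p, snd x \<otimes>\<^bsub>G\<^esub> snd y)"
  "\<one>\<^bsub>extgrp G p f\<^esub> = (0, \<one>\<^bsub>G\<^esub>)"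
  by (simp_all add: extgrp_def)

lemma modeq: "int (p::nat) dvd ((a::int) - b) \<Longrightarrow> a mod int p = b mod int p"
  by (simp add: mod_eq_dvd_iff)

lemma addmod: "int (p::nat) dvd k \<Longrightarrow> 0 \<le> a \<Longrightarrow> a < int p \<Longrightarrow> (a + k) mod int p = a"
proof -
  assume "int p dvd k" "0 \<le> a" "a < int p"
  then have "(a + k) mod int p = a mod int p" by (intro modeq) simp
  then show ?thesis using \<open>0 \<le> a\<close> \<open>a < int p\<close> by simp
qed

lemma dvd_mod_diff: "int (p::nat) dvd ((b::int) mod int p - b)"
  by (subst mod_eq_dvd_iff[symmetric]) simp

lemma mod_in_l: "((a::int) mod int p + b) mod int p = (a + b) mod int (p::nat)"
  by (simp add: mod_add_left_eq)

lemma mod_in_m: "((a::int) + b mod int p + c) mod int p = (a + b + c) mod int (p::nat)"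
proof (rule modeq)
  have "a + b mod int p + c - (a + b + c) = b mod int p - b" by simp
  then show "int p dvd (a + b mod int p + c - (a + b + c))" using dvd_mod_diff by metis
qed

lemma mod_in_l3: "((a::int) mod int p + b + c) mod int p = (a + b + c) mod int (p::nat)"
  using mod_in_m[of 0 a p "b + c"] by (simp add: add.assoc)

context comm_group begin

lemma extgrp_comm_group:
  assumes p1: "p > 1"
    and coc: "\<And>x y z. x \<in> carrier G \<Longrightarrow> y \<in> carrier G \<Longrightarrow> z \<in> carrier G \<Longrightarrow>
        int p dvd (f y z - f (x \<otimes> y) z + f x (y \<otimes> z) - f x y)"
    and sym: "\<And>x y. x \<in> carrier G \<Longrightarrow> y \<in> carrier G \<Longrightarrow> int p dvd (f x y - f y x)"
    and f11: "f \<one> \<one> = 0"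
  shows "comm_group (extgrp G p f)"
proof (rule comm_groupI)
  let ?E = "extgrp G p f"
  have f1k: "int p dvd f \<one> k" if "k \<in> carrier G" for k
    using coc[of \<one> \<one> k] that f11 by simp
  show "\<one>\<^bsub>?E\<^esub> \<in> carrier ?E" using p1 by (simp add: extgrp_simps)
  fix x y z
  assume x: "x \<in> carrier ?E"
  obtain u g where ug: "x = (u, g)" "0 \<le> u" "u < int p" "g \<in> carrier G" using x by (auto simp: extgrp_simps)
  show "\<one>\<^bsub>?E\<^esub> \<otimes>\<^bsub>?E\<^esub> x = x"
    using f1k[of g] ug by (simp add: extgrp_simps addmod)
  show "\<exists>y\<in>carrier ?E. y \<otimes>\<^bsub>?E\<^esub> x = \<one>\<^bsub>?E\<^esub>"
    using ug p1 by (intro bexI[of _ "((- u - f (inv g) g) mod int p, inv g)"])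
      (auto simp: extgrp_simps add.assoc mod_add_left_eq)
  {
    assume y: "y \<in> carrier ?E"
    obtain v h where vh: "y = (v, h)" "0 \<le> v" "v < int p" "h \<in> carrier G" using y by (auto simp: extgrp_simps)
    show "x \<otimes>\<^bsub>?E\<^esub> y \<in> carrier ?E"
      using ug vh p1 by (auto simp: extgrp_simps)
    show "x \<otimes>\<^bsub>?E\<^esub> y = y \<otimes>\<^bsub>?E\<^esub> x"
      using ug vh sym[of g h] by (auto intro!: modeq simp: m_comm extgrp_simps)
    assume z: "z \<in> carrier ?E"
    obtain w k where wk: "z = (w, k)" "0 \<le> w" "w < int p" "k \<in> carrier G" using z by (auto simp: extgrp_simps)
    have "(u + v + f g h + w + f (g \<otimes> h) k) mod int p =
          (u + (v + w + f h k) + f g (h \<otimes> k)) mod int p"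
    proof (rule modeq)
      have c: "int p dvd (f h k - f (g \<otimes> h) k + f g (h \<otimes> k) - f g h)"
        using coc[of g h k] ug vh wk by simp
      have eq: "u + v + f g h + w + f (g \<otimes> h) k - (u + (v + w + f h k) + f g (h \<otimes> k))
          = - (f h k - f (g \<otimes> h) k + f g (h \<otimes> k) - f g h)" by (simp add: algebra_simps)
      show "int p dvd (u + v + f g h + w + f (g \<otimes> h) k - (u + (v + w + f h k) + f g (h \<otimes> k)))"
        unfolding eq using c by (simp only: dvd_minus_iff)
    qed
    then show "x \<otimes>\<^bsub>?E\<^esub> y \<otimes>\<^bsub>?E\<^esub> z = x \<otimes>\<^bsub>?E\<^esub> (y \<otimes>\<^bsub>?E\<^esub> z)"
      using ug vh wk by (simp add: extgrp_simps mod_in_l3 mod_in_m m_assoc)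
  }
qed

end



context comm_group begin

lemma snd_pow_ext: "snd (x [^]\<^bsub>extgrp G p f\<^esub> (n::nat)) = snd x [^] n"
  by (induction n) (simp_all add: extgrp_simps)

lemma A_pow_ext:
  assumes "f \<one> \<one> = 0"
  shows "(w, \<one>) [^]\<^bsub>extgrp G p f\<^esub> (n::nat) = ((int n * w) mod int p, \<one>)"
proof (induction n)
  case 0
  then show ?case by (simp add: extgrp_simps)
next
  case (Suc n)
  then show ?case using assms by (simp add: extgrp_simps mod_add_left_eq mod_add_right_eq algebra_simps)
qed

lemma gen_pow: "h \<in> carrier G \<Longrightarrow> h [^] (n::nat) \<in> generate G {h}"
proof (induction n)
  case 0
  then show ?case by (simp add: generate.one)
next
  case (Suc n)
  then show ?case by (simp add: generate.eng generate.incl)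
qed

lemma lift_pow_ext:
  assumes h: "h \<in> carrier G"
    and hc: "\<forall>x\<in>generate G {h}. \<forall>y\<in>generate G {h}. int p dvd (f x y - (c y - c (x \<otimes> y) + c x))"
    and f11: "f \<one> \<one> = 0"
  shows "((- c h) mod int p, h) [^]\<^bsub>extgrp G p f\<^esub> (n::nat) = ((- c (h [^] n)) mod int p, h [^] n)"
proof (induction n)
  case 0
  have "int p dvd (f \<one> \<one> - (c \<one> - c (\<one> \<otimes> \<one>) + c \<one>))"
    using hc generate.one[of G "{h}"] by blast
  then have "int p dvd (- c \<one>)" using f11 by simp
  then show ?case by (simp add: extgrp_simps)
next
  case (Suc n)
  have d: "int p dvd (f (h [^] n) h - (c h - c (h [^] n \<otimes> h) + c (h [^] n)))"
    using hc gen_pow[OF h, of n] generate.incl[of h "{h}" G] by blast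
  have "((- c (h [^] n)) mod int p + (- c h) mod int p + f (h [^] n) h) mod int p
      = (- c (h [^] n) + - c h + f (h [^] n) h) mod int p"
    by (simp only: mod_in_l3 mod_in_m)
  also have "\<dots> = (- c (h [^] n \<otimes> h)) mod int p"
  proof (rule modeq)
    have "- c (h [^] n) + - c h + f (h [^] n) h - - c (h [^] n \<otimes> h) =
          f (h [^] n) h - (c h - c (h [^] n \<otimes> h) + c (h [^] n))" by simp
    then show "int p dvd (- c (h [^] n) + - c h + f (h [^] n) h - - c (h [^] n \<otimes> h))"
      using d by metis
  qed
  finally show ?case using Suc by (simp add: extgrp_simps)
qed

lemma ext_main:
  assumes fin: "finite (carrier G)" and pr: "Factorial_Ring.prime p"
    and coc: "\<And>x y z. x \<in> carrier G \<Longrightarrow> y \<in> carrier G \<Longrightarrow> z \<in> carrier G \<Longrightarrow>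
        int p dvd (f y z - f (x \<otimes> y) z + f x (y \<otimes> z) - f x y)"
    and sym: "\<And>x y. x \<in> carrier G \<Longrightarrow> y \<in> carrier G \<Longrightarrow> int p dvd (f x y - f y x)"
    and f11: "f \<one> \<one> = 0"
    and cyc: "\<And>h. h \<in> carrier G \<Longrightarrow> \<exists>c. \<forall>x\<in>generate G {h}. \<forall>y\<in>generate G {h}.
                 int p dvd (f x y - (c y - c (x \<otimes> y) + c x))"
  shows "\<exists>c. \<forall>g\<in>carrier G. \<forall>h\<in>carrier G. int p dvd (f g h - (c h - c (g \<otimes> h) + c g))"
proof -
  let ?E = "extgrp G p f"
  have p1: "p > 1" using pr prime_gt_1_nat by blast
  interpret E: comm_group ?E by (rule extgrp_comm_group[OF p1 coc sym f11])
  have finE: "finite (carrier ?E)" by (simp add: extgrp_simps fin)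
  define a where "a = (1::int, \<one>)"
  have aE: "a \<in> carrier ?E" using p1 by (simp add: a_def extgrp_simps)
  have apow: "a [^]\<^bsub>?E\<^esub> (n::nat) = ((int n) mod int p, \<one>)" for n
    unfolding a_def using A_pow_ext[where f=f and p=p, OF f11, of 1 n] by simp
  have ap: "a [^]\<^bsub>?E\<^esub> p = \<one>\<^bsub>?E\<^esub>" by (simp add: apow extgrp_simps)
  have notp: "y [^]\<^bsub>?E\<^esub> p \<noteq> a" if yE: "y \<in> carrier ?E" for y
  proof
    assume eq: "y [^]\<^bsub>?E\<^esub> p = a"
    obtain u h where uh: "y = (u, h)" "0 \<le> u" "u < int p" "h \<in> carrier G"
      using yE by (auto simp: extgrp_simps)
    have hp: "h [^] p = \<one>" using snd_pow_ext[where x=y and p=p and f=f and n=p] eq uh by (simp add: a_def)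
    obtain c where hc: "\<forall>x\<in>generate G {h}. \<forall>y\<in>generate G {h}. int p dvd (f x y - (c y - c (x \<otimes> y) + c x))"
      using cyc[OF uh(4)] by blast
    have c1: "int p dvd (f \<one> \<one> - (c \<one> - c (\<one> \<otimes> \<one>) + c \<one>))"
      using hc generate.one[of G "{h}"] by blast
    then have c1': "(- c \<one>) mod int p = 0" using f11 by simp
    define z where "z = ((- c h) mod int p, h)"
    define w where "w = (u - (- c h) mod int p - f h \<one>) mod int p"
    have zE: "z \<in> carrier ?E" using p1 uh by (simp add: z_def extgrp_simps)
    have wE: "(w, \<one>) \<in> carrier ?E" using p1 by (simp add: w_def extgrp_simps)
    have "((- c h) mod int p + w + f h \<one>) mod int p = u mod int p"
      unfolding w_def by (simp only: mod_in_m) simp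
    then have yz: "y = z \<otimes>\<^bsub>?E\<^esub> (w, \<one>)" using uh by (simp add: z_def extgrp_simps)
    have "y [^]\<^bsub>?E\<^esub> p = z [^]\<^bsub>?E\<^esub> p \<otimes>\<^bsub>?E\<^esub> (w, \<one>) [^]\<^bsub>?E\<^esub> p"
      unfolding yz by (rule E.nat_pow_distrib[OF zE wE])
    also have "z [^]\<^bsub>?E\<^esub> p = \<one>\<^bsub>?E\<^esub>"
      unfolding z_def lift_pow_ext[OF uh(4) hc f11] hp using c1' by (simp add: extgrp_simps)
    also have "(w, \<one>) [^]\<^bsub>?E\<^esub> p = \<one>\<^bsub>?E\<^esub>"
      unfolding A_pow_ext[where f=f and p=p, OF f11] by (simp add: extgrp_simps)
    finally have "y [^]\<^bsub>?E\<^esub> p = \<one>\<^bsub>?E\<^esub>" by simp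
    then show False using eq by (simp add: a_def extgrp_simps)
  qed
  obtain M where sM: "subgroup M ?E" and aM: "a \<notin> M"
    and gen: "\<forall>x\<in>carrier ?E. \<exists>m\<in>M. \<exists>j::nat. x = m \<otimes>\<^bsub>?E\<^esub> a [^]\<^bsub>?E\<^esub> j"
    using E.split_lemma[OF finE pr aE ap notp] by blast
  have ME: "M \<subseteq> carrier ?E" using sM subgroup.subset by blast
  have uniq: "m1 = m2" if m: "m1 \<in> M" "m2 \<in> M" "snd m1 = snd m2" for m1 m2
  proof -
    have m1E: "m1 \<in> carrier ?E" and m2E: "m2 \<in> carrier ?E" using m ME by auto
    define d where "d = m1 \<otimes>\<^bsub>?E\<^esub> inv\<^bsub>?E\<^esub> m2"
    have dM: "d \<in> M" unfolding d_def using sM m by (simp add: subgroup.m_closed subgroup.m_inv_closed)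
    have dE: "d \<in> carrier ?E" using dM ME by auto
    have m1d: "m1 = d \<otimes>\<^bsub>?E\<^esub> m2" unfolding d_def using m1E m2E
      by (simp add: E.m_assoc)
    have s2: "snd m2 \<in> carrier G" and sd: "snd d \<in> carrier G" using m2E dE by (auto simp: extgrp_simps)
    have "snd d \<otimes> snd m2 = snd m2" using m1d m(3) by (simp add: extgrp_simps)
    then have "snd d = \<one>" using s2 sd by simp
    then obtain w where dw: "d = (w, \<one>)" "0 \<le> w" "w < int p" using dE
      by (cases d) (auto simp: extgrp_simps)
    show ?thesis
    proof (cases "w = 0")
      case True
      then have "d = \<one>\<^bsub>?E\<^esub>" using dw by (simp add: extgrp_simps)
      then show ?thesis using m1d m2E by simp
    next
      case False
      have "\<not> int p dvd w" using dw False zdvd_not_zless by fastforce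
      moreover have "Factorial_Ring.prime (int p)" using pr by simp
      ultimately have "coprime (int p) w" by (intro prime_imp_coprime)
      then have "gcd w (int p) = 1" by (simp add: coprime_commute)
      then obtain u v where uv: "u * w + v * int p = 1" by (metis bezout_int)
      define s where "s = nat (u mod int p)"
      have "int s = u mod int p" unfolding s_def using p1 by simp
      then have "(int s * w) mod int p = (u * w) mod int p" by (simp add: mod_mult_left_eq)
      also have "u * w = 1 + int p * (- v)" using uv by (simp add: algebra_simps)
      also have "(1 + int p * (- v)) mod int p = 1 mod int p" by (rule modeq) simp
      also have "(1::int) mod int p = 1" using p1 by simp
      finally have "d [^]\<^bsub>?E\<^esub> s = a" unfolding dw(1) A_pow_ext[where f=f and p=p, OF f11] a_def by simp
      moreover have "d [^]\<^bsub>?E\<^esub> s \<in> M"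
        using E.subgroup_int_pow_closed[OF sM dM, of "int s"] by (simp add: int_pow_int)
      ultimately show ?thesis using aM by simp
    qed
  qed
  have sec: "\<exists>m. m \<in> M \<and> snd m = h" if h: "h \<in> carrier G" for h
  proof -
    have "(0, h) \<in> carrier ?E" using h p1 by (simp add: extgrp_simps)
    then obtain m j where mj: "m \<in> M" "(0, h) = m \<otimes>\<^bsub>?E\<^esub> a [^]\<^bsub>?E\<^esub> (j::nat)" using gen by blast
    have "snd m \<in> carrier G" using mj ME by (auto simp: extgrp_simps)
    then have "snd m = h" using mj(2) by (simp add: extgrp_simps apow)
    then show ?thesis using mj by blast
  qed
  define s where "s h = (SOME m. m \<in> M \<and> snd m = h)" for h
  have sprop: "s h \<in> M \<and> snd (s h) = h" if "h \<in> carrier G" for h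
    unfolding s_def using someI_ex[OF sec[OF that]] .
  show ?thesis
  proof (intro exI[of _ "\<lambda>h. - fst (s h)"] ballI)
    fix g h assume g: "g \<in> carrier G" and h: "h \<in> carrier G"
    have gh: "g \<otimes> h \<in> carrier G" using g h by simp
    have "s g \<otimes>\<^bsub>?E\<^esub> s h \<in> M" using sprop[OF g] sprop[OF h] sM by (simp add: subgroup.m_closed)
    moreover have "snd (s g \<otimes>\<^bsub>?E\<^esub> s h) = snd (s (g \<otimes> h))"
      using sprop[OF g] sprop[OF h] sprop[OF gh] by (simp add: extgrp_simps)
    ultimately have "s g \<otimes>\<^bsub>?E\<^esub> s h = s (g \<otimes> h)" using sprop[OF gh] uniq by blast
    then have e: "(fst (s g) + fst (s h) + f g h) mod int p = fst (s (g \<otimes> h))"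
      using sprop[OF g] sprop[OF h] by (metis extgrp_simps(2) fst_conv)
    have "s (g \<otimes> h) \<in> carrier ?E" using sprop[OF gh] ME by auto
    then have "fst (s (g \<otimes> h)) mod int p = fst (s (g \<otimes> h))" by (auto simp: extgrp_simps)
    with e have "(fst (s g) + fst (s h) + f g h) mod int p = fst (s (g \<otimes> h)) mod int p" by simp
    then have "int p dvd (fst (s g) + fst (s h) + f g h - fst (s (g \<otimes> h)))" by (simp add: mod_eq_dvd_iff)
    moreover have "fst (s g) + fst (s h) + f g h - fst (s (g \<otimes> h)) =
        f g h - (- fst (s h) - - fst (s (g \<otimes> h)) + - fst (s g))" by simp
    ultimately show "int p dvd (f g h - (- fst (s h) - - fst (s (g \<otimes> h)) + - fst (s g)))" by metis
  qed
qed

end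



context comm_group begin

lemma cyc_from_R:
  assumes hyp: "\<forall>(D, I)\<in>typical_pairs G. in_R G p D I f" and h: "h \<in> carrier G"
  shows "\<exists>c. \<forall>x\<in>generate G {h}. \<forall>y\<in>generate G {h}. int p dvd (f x y - (c y - c (x \<otimes> y) + c x))"
proof -
  define D where "D = generate G {h}"
  have hD: "h \<in> D" unfolding D_def by (simp add: generate.incl)
  have DG: "D \<subseteq> carrier G" unfolding D_def using h generate_incl by blast
  have "(D, D) \<in> typical_pairs G"
    unfolding typical_pairs_def quot_generator_def
  proof (clarify, intro conjI)
    show "\<exists>a\<in>carrier G. \<exists>b\<in>carrier G. D = generate G {a, b}" using h unfolding D_def by (intro bexI[of _ h]) auto
    show "\<exists>c\<in>D. D = generate G {c}" using hD unfolding D_def by auto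
    show "\<exists>t. t \<in> D \<and> (\<forall>d\<in>D. \<exists>k::nat. d \<otimes> inv (t [^] k) \<in> D)"
    proof (intro exI[of _ h] conjI ballI)
      show "h \<in> D" by (rule hD)
      fix d assume "d \<in> D"
      then have "d \<otimes> inv (h [^] (0::nat)) \<in> D" using DG by (auto simp: subsetD)
      then show "\<exists>k::nat. d \<otimes> inv (h [^] k) \<in> D" by blast
    qed
  qed
  then have "in_R G p D D f" using hyp by auto
  then obtain t c where eq: "\<forall>x\<in>hatD G D D t. \<forall>y\<in>hatD G D D t.
           (f (snd x) (snd y) - (c y - c (hatD_mult G x y) + c x)) mod int p = 0"
    unfolding in_R_def by blast
  define z0 where "z0 = (\<lambda>n::nat. 0::int)"
  have z0Z: "z0 \<in> Zhat" by (simp add: Zhat_def z0_def)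
  have inhat: "(z0, d) \<in> hatD G D D t" if "d \<in> D" for d
    using that z0Z DG by (auto simp: hatD_def z0_def subsetD)
  have mult: "hatD_mult G (z0, d) (z0, e) = (z0, d \<otimes> e)" for d e
    by (simp add: hatD_mult_def zhat_add_def z0_def)
  show ?thesis
  proof (intro exI[of _ "\<lambda>x. c (z0, x)"] ballI)
    fix x y assume "x \<in> generate G {h}" "y \<in> generate G {h}"
    then have "(f x y - (c (z0, y) - c (z0, x \<otimes> y) + c (z0, x))) mod int p = 0"
      using eq inhat mult unfolding D_def by (metis fst_conv snd_conv)
    then show "int p dvd (f x y - (c (z0, y) - c (z0, x \<otimes> y) + c (z0, x)))"
      by (simp add: dvd_eq_mod_eq_0)
  qed
qed

end



lemma dvdc1: "(k::int) dvd (a - b - c) \<Longrightarrow> k dvd b \<Longrightarrow> k dvd c \<Longrightarrow> k dvd a"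
proof -
  assume h: "k dvd (a - b - c)" "k dvd b" "k dvd c"
  have "k dvd ((a - b - c) + b + c)" by (rule dvd_add[OF dvd_add[OF h(1) h(2)] h(3)])
  then show ?thesis by simp
qed

lemma dvdc2: "(k::int) dvd (a - b - c) \<Longrightarrow> k dvd a \<Longrightarrow> k dvd b \<Longrightarrow> k dvd c"
proof -
  assume h: "k dvd (a - b - c)" "k dvd a" "k dvd b"
  have "k dvd ((a - b) - (a - b - c))" by (rule dvd_diff[OF dvd_diff[OF h(2) h(3)] h(1)])
  then show ?thesis by simp
qed

context comm_group begin

context
  fixes p :: nat and f :: "'a \<Rightarrow> 'a \<Rightarrow> int"
  assumes coc: "\<And>x y z. x \<in> carrier G \<Longrightarrow> y \<in> carrier G \<Longrightarrow> z \<in> carrier G \<Longrightarrow>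
        int p dvd (f y z - f (x \<otimes> y) z + f x (y \<otimes> z) - f x y)"
begin

lemma bil2:
  assumes x: "x \<in> carrier G" and y: "y \<in> carrier G" and z: "z \<in> carrier G"
  shows "int p dvd ((f z (x \<otimes> y) - f (x \<otimes> y) z) - (f z x - f x z) - (f z y - f y z))"
proof -
  have c1: "int p dvd (f y z - f (x \<otimes> y) z + f x (y \<otimes> z) - f x y)" using coc x y z by blast
  have c2: "int p dvd (f z y - f (x \<otimes> z) y + f x (z \<otimes> y) - f x z)" using coc x y z by blast
  have c3: "int p dvd (f x y - f (z \<otimes> x) y + f z (x \<otimes> y) - f z x)" using coc x y z by blast
  have "int p dvd ((f y z - f (x \<otimes> y) z + f x (y \<otimes> z) - f x y)
     - (f z y - f (x \<otimes> z) y + f x (z \<otimes> y) - f x z) + (f x y - f (z \<otimes> x) y + f z (x \<otimes> y) - f z x))"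
    by (rule dvd_add[OF dvd_diff[OF c1 c2] c3])
  moreover have "z \<otimes> y = y \<otimes> z" "z \<otimes> x = x \<otimes> z" using x y z m_comm by auto
  ultimately show ?thesis by (simp add: algebra_simps)
qed

lemma bsym_one:
  assumes g: "g \<in> carrier G"
  shows "int p dvd (f g \<one> - f \<one> g)"
proof -
  have "int p dvd (f \<one> g - f g \<one>)" using bil2[OF one_closed one_closed g] by simp
  then have "int p dvd - (f \<one> g - f g \<one>)" by (simp only: dvd_minus_iff)
  then show ?thesis by simp
qed

lemma bsym_gen:
  assumes g: "g \<in> carrier G" and i: "i \<in> generate G {g}"
  shows "int p dvd (f g i - f i g)"
  using i
proof (induction rule: generate.induct)
  case one
  then show ?case using bsym_one[OF g] .
next
  case (incl h)
  then show ?case by simp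
next
  case (inv h)
  then have hg: "h = g" by simp
  have "int p dvd ((f g (g \<otimes> inv g) - f (g \<otimes> inv g) g) - (f g g - f g g) - (f g (inv g) - f (inv g) g))"
    using bil2[OF g inv_closed[OF g] g] .
  then have "int p dvd ((f g \<one> - f \<one> g) - 0 - (f g (inv g) - f (inv g) g))" using g by simp
  then have "int p dvd (f g (inv g) - f (inv g) g)"
    by (rule dvdc2) (simp_all add: bsym_one[OF g])
  then show ?case using hg by simp
next
  case (eng h1 h2)
  have "h1 \<in> carrier G" "h2 \<in> carrier G" using eng.hyps g generate_incl by auto
  from bil2[OF this g] show ?case
    by (rule dvdc1) (use eng.IH in auto)
qed

lemma bsym_pow:
  assumes g: "g \<in> carrier G" and t: "t \<in> carrier G" and bt: "int p dvd (f g t - f t g)"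
  shows "int p dvd (f g (t [^] (k::nat)) - f (t [^] k) g)"
proof (induction k)
  case 0
  then show ?case using bsym_one[OF g] by simp
next
  case (Suc k)
  have tk: "t [^] k \<in> carrier G" using t by simp
  from bil2[OF tk t g] have "int p dvd (f g (t [^] Suc k) - f (t [^] Suc k) g
      - (f g (t [^] k) - f (t [^] k) g) - (f g t - f t g))" by simp
  then show ?case by (rule dvdc1) (use Suc bt in auto)
qed

end
end



context comm_group begin

lemma sym_from_R:
  assumes hyp: "\<forall>(D, I)\<in>typical_pairs G. in_R G p D I f" and fin: "finite (carrier G)"
    and coc: "\<And>x y z. x \<in> carrier G \<Longrightarrow> y \<in> carrier G \<Longrightarrow> z \<in> carrier G \<Longrightarrow>
        int p dvd (f y z - f (x \<otimes> y) z + f x (y \<otimes> z) - f x y)"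
    and g: "g \<in> carrier G" and h: "h \<in> carrier G"
  shows "int p dvd (f g h - f h g)"
proof -
  define D where "D = generate G {g, h}"
  define I where "I = generate G {g}"
  have subD: "subgroup D G" unfolding D_def using g h by (intro generate_is_subgroup) auto
  have DG: "D \<subseteq> carrier G" using subD subgroup.subset by blast
  have gD: "g \<in> D" and hD: "h \<in> D" unfolding D_def by (auto intro: generate.incl)
  have ID: "I \<subseteq> D" unfolding I_def using gD subD by (intro generate_subgroup_incl) auto
  have gI: "g \<in> I" unfolding I_def by (auto intro: generate.incl)
  have oneI: "\<one> \<in> I" unfolding I_def by (rule generate.one)
  have ord0: "order G > 0" unfolding order_def using fin g card_gt_0_iff by blast
  have qg: "\<exists>k::nat. d \<otimes> inv (h [^] k) \<in> I" if "d \<in> D" for d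
    using that unfolding D_def
  proof (induction rule: generate.induct)
    case one
    have "\<one> \<otimes> inv (h [^] (0::nat)) \<in> I" using oneI by simp
    then show ?case by blast
  next
    case (incl x)
    then show ?case
    proof
      assume "x = g"
      then have "x \<otimes> inv (h [^] (0::nat)) \<in> I" using gI g by simp
      then show ?case by blast
    next
      assume "x \<in> {h}"
      then have "x \<otimes> inv (h [^] (1::nat)) \<in> I" using oneI h by simp
      then show ?case by blast
    qed
  next
    case (inv x)
    then show ?case
    proof
      assume "x = g"
      then have "inv x \<otimes> inv (h [^] (0::nat)) \<in> I" using g unfolding I_def by (simp add: generate.inv)
      then show ?case by blast
    next
      assume "x \<in> {h}"
      then have xh: "x = h" by simp
      have hh1: "h [^] (order G - 1) \<otimes> h = \<one>"
      proof -
        have "h [^] (order G - 1) \<otimes> h = h [^] order G" using ord0 h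
          by (metis Suc_diff_1 nat_pow_Suc)
        also have "\<dots> = \<one>" using h by (rule pow_order_eq_1)
        finally show ?thesis .
      qed
      have "inv x \<otimes> inv (h [^] (order G - 1)) = inv (h [^] (order G - 1) \<otimes> h)"
        using h xh by (simp add: inv_mult_group)
      also have "\<dots> = \<one>" using hh1 by simp
      finally have "inv x \<otimes> inv (h [^] (order G - 1)) \<in> I" using oneI by simp
      then show ?case by blast
    qed
  next
    case (eng d1 d2)
    obtain k1 k2 :: nat where k: "d1 \<otimes> inv (h [^] k1) \<in> I" "d2 \<otimes> inv (h [^] k2) \<in> I"
      using eng.IH by blast
    have d12: "d1 \<in> carrier G" "d2 \<in> carrier G" using eng.hyps DG[unfolded D_def] by auto
    have "(d1 \<otimes> d2) \<otimes> inv (h [^] (k1 + k2)) = (d1 \<otimes> inv (h [^] k1)) \<otimes> (d2 \<otimes> inv (h [^] k2))"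
    proof -
      have "inv (h [^] (k1 + k2)) = inv (h [^] k1) \<otimes> inv (h [^] k2)"
        using h by (simp add: nat_pow_mult[symmetric] inv_mult)
      then show ?thesis using d12 h by (simp add: comm4)
    qed
    also have "\<dots> \<in> I" using k unfolding I_def by (rule generate.eng)
    finally show ?case by blast
  qed
  have "(D, I) \<in> typical_pairs G"
    unfolding typical_pairs_def quot_generator_def
  proof (clarify, intro conjI)
    show "\<exists>a\<in>carrier G. \<exists>b\<in>carrier G. D = generate G {a, b}" using g h unfolding D_def by blast
    show "\<exists>c\<in>D. I = generate G {c}" using gD unfolding I_def by blast
    show "\<exists>t. t \<in> D \<and> (\<forall>d\<in>D. \<exists>k::nat. d \<otimes> inv (t [^] k) \<in> I)"
      using hD qg by blast
  qed
  then have "in_R G p D I f" using hyp by auto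
  then obtain t c where qgt: "quot_generator G D I t" and eq: "\<forall>x\<in>hatD G D I t. \<forall>y\<in>hatD G D I t.
           (f (snd x) (snd y) - (c y - c (hatD_mult G x y) + c x)) mod int p = 0"
    unfolding in_R_def by blast
  have tD: "t \<in> D" and qt: "\<And>d. d \<in> D \<Longrightarrow> \<exists>k::nat. d \<otimes> inv (t [^] k) \<in> I"
    using qgt unfolding quot_generator_def by auto
  have t: "t \<in> carrier G" using tD DG by auto
  have bgt: "int p dvd (f g t - f t g)"
  proof (cases "t \<in> I")
    case True
    then show ?thesis using bsym_gen[where p=p and f=f, OF coc g] unfolding I_def by blast
  next
    case False
    define n where "n = card D div card I"
    have finD: "finite D" using fin DG finite_subset by blast
    have finI: "finite I" using finD ID finite_subset by blast
    have cI: "card I > 0" using finI oneI card_gt_0_iff by blast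
    define J where "J = (\<lambda>i. i \<otimes> t) ` I"
    have JD: "J \<subseteq> D" unfolding J_def
    proof
      fix j assume "j \<in> (\<lambda>i. i \<otimes> t) ` I"
      then obtain i where "i \<in> I" "j = i \<otimes> t" by blast
      then show "j \<in> D" using subgroup.m_closed[OF subD _ tD, of i] ID by blast
    qed
    have IJ: "I \<inter> J = {}"
    proof (rule ccontr)
      assume "I \<inter> J \<noteq> {}"
      then obtain i where i: "i \<in> I" "i \<otimes> t \<in> I" unfolding J_def by blast
      have sI: "subgroup I G" unfolding I_def using g by (intro generate_is_subgroup) auto
      have ic: "i \<in> carrier G" using i ID DG by auto
      have "inv i \<otimes> (i \<otimes> t) \<in> I" using i sI subgroup.m_closed subgroup.m_inv_closed by metis
      then have "t \<in> I" using ic t by (simp add: m_assoc[symmetric])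
      then show False using False by simp
    qed
    have "inj_on (\<lambda>i. i \<otimes> t) I" using inj_on_multc[OF t] ID DG by (meson inj_on_subset order_trans)
    then have cJ: "card J = card I" unfolding J_def by (rule card_image)
    have "card (I \<union> J) = card I + card J" using finI finD JD IJ by (intro card_Un_disjoint) (auto intro: finite_subset)
    moreover have "card (I \<union> J) \<le> card D" using ID JD finD by (intro card_mono) auto
    ultimately have "2 * card I \<le> card D" using cJ by simp
    then have "(2 * card I) div card I \<le> card D div card I" by (rule div_le_mono)
    then have n2: "n \<ge> 2" unfolding n_def using cI by simp
    define z0 where "z0 = (\<lambda>m::nat. 0::int)"
    define o1 where "o1 = (\<lambda>m::nat. if m = 0 then 0 else 1 mod int m)"
    have z0Z: "z0 \<in> Zhat" by (simp add: Zhat_def z0_def)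
    have o1Z: "o1 \<in> Zhat" unfolding Zhat_def o1_def
    proof (intro CollectI conjI allI impI)
      fix m k :: nat assume "0 < m" "0 < k" "k dvd m"
      then show "(if m = 0 then 0 else 1 mod int m) mod int k = (if k = 0 then 0 else 1 mod int k)"
        by (simp add: mod_mod_cancel)
    qed auto
    have o1n: "o1 n = 1" unfolding o1_def using n2 by simp
    have xh: "(z0, g) \<in> hatD G D I t" using z0Z gD gI g by (simp add: hatD_def z0_def)
    have yh: "(o1, t) \<in> hatD G D I t" using o1Z tD t oneI o1n by (simp add: hatD_def n_def[symmetric])
    have cm: "hatD_mult G (z0, g) (o1, t) = hatD_mult G (o1, t) (z0, g)"
      using g t by (simp add: hatD_mult_def zhat_add_def m_comm add.commute)
    have e1: "int p dvd (f g t - (c (o1, t) - c (hatD_mult G (z0, g) (o1, t)) + c (z0, g)))"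
      using eq[rule_format, OF xh yh] by (simp add: dvd_eq_mod_eq_0)
    have e2: "int p dvd (f t g - (c (z0, g) - c (hatD_mult G (o1, t) (z0, g)) + c (o1, t)))"
      using eq[rule_format, OF yh xh] by (simp add: dvd_eq_mod_eq_0)
    have "int p dvd ((f g t - (c (o1, t) - c (hatD_mult G (z0, g) (o1, t)) + c (z0, g)))
        - (f t g - (c (z0, g) - c (hatD_mult G (o1, t) (z0, g)) + c (o1, t))))"
      by (rule dvd_diff[OF e1 e2])
    then show ?thesis unfolding cm by simp
  qed
  obtain k :: nat where ik: "h \<otimes> inv (t [^] k) \<in> I" using qt[OF hD] by blast
  define i where "i = h \<otimes> inv (t [^] k)"
  have ic: "i \<in> carrier G" unfolding i_def using h t by simp
  have hi: "h = i \<otimes> t [^] k" unfolding i_def using h t by (simp add: m_assoc)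
  have "int p dvd (f g (i \<otimes> t [^] k) - f (i \<otimes> t [^] k) g - (f g i - f i g) - (f g (t [^] k) - f (t [^] k) g))"
    using bil2[where p=p and f=f, OF coc ic _ g, of "t [^] k"] t by simp
  then have "int p dvd (f g (i \<otimes> t [^] k) - f (i \<otimes> t [^] k) g)"
    by (rule dvdc1) (use bsym_gen[where p=p and f=f, OF coc g] ik i_def I_def bsym_pow[where p=p and f=f, OF coc g t bgt] in auto)
  then show ?thesis using hi by simp
qed

end


theorem mainTheorem13:
  fixes H :: "('g,'b) monoid_scheme" and p :: nat and f :: "'g \<Rightarrow> 'g \<Rightarrow> int"
  assumes "comm_group H" and "finite (carrier H)"
    and "Factorial_Ring.prime p" and "\<exists>k. order H = p ^ k"
    and "cocycle2 p (carrier H) (\<lambda>x y. x \<otimes>\<^bsub>H\<^esub> y) f"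
    and "\<forall>(D, I)\<in>typical_pairs H. in_R H p D I f"
  shows "coboundary2 p (carrier H) (\<lambda>x y. x \<otimes>\<^bsub>H\<^esub> y) f"
proof -
  interpret H: comm_group H by (rule assms(1))
  have coc: "int p dvd (f y z - f (x \<otimes>\<^bsub>H\<^esub> y) z + f x (y \<otimes>\<^bsub>H\<^esub> z) - f x y)"
    if "x \<in> carrier H" "y \<in> carrier H" "z \<in> carrier H" for x y z
    using assms(5) that unfolding cocycle2_def by (simp add: dvd_eq_mod_eq_0)
  have sym: "int p dvd (f x y - f y x)" if "x \<in> carrier H" "y \<in> carrier H" for x y
    using H.sym_from_R[OF assms(6) assms(2) coc that] by blast
  have cyc: "\<exists>c. \<forall>x\<in>generate H {h}. \<forall>y\<in>generate H {h}.
      int p dvd (f x y - (c y - c (x \<otimes>\<^bsub>H\<^esub> y) + c x))" if "h \<in> carrier H" for h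
    using H.cyc_from_R[OF assms(6) that] .
  define k where "k = f \<one>\<^bsub>H\<^esub> \<one>\<^bsub>H\<^esub>"
  define f0 where "f0 = (\<lambda>x y. f x y - k)"
  have coc0: "int p dvd (f0 y z - f0 (x \<otimes>\<^bsub>H\<^esub> y) z + f0 x (y \<otimes>\<^bsub>H\<^esub> z) - f0 x y)"
    if "x \<in> carrier H" "y \<in> carrier H" "z \<in> carrier H" for x y z
  proof -
    have "f0 y z - f0 (x \<otimes>\<^bsub>H\<^esub> y) z + f0 x (y \<otimes>\<^bsub>H\<^esub> z) - f0 x y =
          f y z - f (x \<otimes>\<^bsub>H\<^esub> y) z + f x (y \<otimes>\<^bsub>H\<^esub> z) - f x y" by (simp add: f0_def)
    then show ?thesis using coc[OF that] by simp
  qed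
  have sym0: "int p dvd (f0 x y - f0 y x)" if "x \<in> carrier H" "y \<in> carrier H" for x y
    using sym[OF that] by (simp add: f0_def)
  have f011: "f0 \<one>\<^bsub>H\<^esub> \<one>\<^bsub>H\<^esub> = 0" by (simp add: f0_def k_def)
  have cyc0: "\<exists>c. \<forall>x\<in>generate H {h}. \<forall>y\<in>generate H {h}.
      int p dvd (f0 x y - (c y - c (x \<otimes>\<^bsub>H\<^esub> y) + c x))" if hc: "h \<in> carrier H" for h
  proof -
    obtain c where c: "\<forall>x\<in>generate H {h}. \<forall>y\<in>generate H {h}.
      int p dvd (f x y - (c y - c (x \<otimes>\<^bsub>H\<^esub> y) + c x))" using cyc[OF hc] by blast
    show ?thesis
    proof (intro exI[of _ "\<lambda>x. c x - k"] ballI)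
      fix x y assume "x \<in> generate H {h}" "y \<in> generate H {h}"
      then have "int p dvd (f x y - (c y - c (x \<otimes>\<^bsub>H\<^esub> y) + c x))" using c by blast
      moreover have eq: "f0 x y - ((c y - k) - (c (x \<otimes>\<^bsub>H\<^esub> y) - k) + (c x - k)) =
          f x y - (c y - c (x \<otimes>\<^bsub>H\<^esub> y) + c x)" by (simp add: f0_def)
      ultimately show "int p dvd (f0 x y - ((c y - k) - (c (x \<otimes>\<^bsub>H\<^esub> y) - k) + (c x - k)))"
        by (simp only: eq)
    qed
  qed
  obtain c0 where c0: "\<forall>g\<in>carrier H. \<forall>h\<in>carrier H.
      int p dvd (f0 g h - (c0 h - c0 (g \<otimes>\<^bsub>H\<^esub> h) + c0 g))"
    using H.ext_main[OF assms(2) assms(3) coc0 sym0 f011 cyc0] by blast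
  show ?thesis unfolding coboundary2_def
  proof (intro exI[of _ "\<lambda>x. c0 x + k"] ballI)
    fix g h assume "g \<in> carrier H" "h \<in> carrier H"
    then have "int p dvd (f0 g h - (c0 h - c0 (g \<otimes>\<^bsub>H\<^esub> h) + c0 g))" using c0 by blast
    then show "(f g h - (c0 h + k - (c0 (g \<otimes>\<^bsub>H\<^esub> h) + k) + (c0 g + k))) mod int p = 0"
      by (simp add: f0_def dvd_eq_mod_eq_0 algebra_simps)
  qed
qed

end
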